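(* Let $K$ be a finite index subgroup of $F_2$. Then for any $h\in\Xi$ and any $z\in F_2$, \[ \lim_{n\to\infty} d_n^h(zK)=\frac{1}{[F_2:K]}. \]
   Context: $F_2$ is the free group on $a,b$ and $\Xi=\{a,b,a^{-1},b^{-1}\}$; $S_n$ is the set of elements of $F_2$ whose reduced word in $\Xi$ has length $n$. For $A\subseteq F_2$, $h\in\Xi$ and $n\geq1$, define $d_n^h(A)=\frac{1}{2}\left(\frac{|A\cap S_n|}{|S_n|}+\frac{|A\cap hS_n|}{|S_n|}\right)$, where $hS_n=\{hg:g\in S_n\}$. *)

theory Defs
  imports Complex_Main
begin

text \<open>The free group F_2 on a, b, realised as reduced words over the alphabet
  Xi = {a, b, a^-1, b^-1}. A letter (g, e) is generator a (g = False) or b (g = True),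
  with e = True meaning the inverse letter. Thus Xi is the whole type letter.\<close>

type_synonym letter = "bool \<times> bool"

definition inv_letter :: "letter \<Rightarrow> letter" where
  "inv_letter x = (fst x, \<not> snd x)"

definition reduced :: "letter list \<Rightarrow> bool" where
  "reduced w \<longleftrightarrow> (\<forall>i. Suc i < length w \<longrightarrow> w ! Suc i \<noteq> inv_letter (w ! i))"

definition F2 :: "letter list set" where
  "F2 = {w. reduced w}"

definition mul_letter :: "letter \<Rightarrow> letter list \<Rightarrow> letter list" where
  "mul_letter x w = (case w of [] \<Rightarrow> [x] | y # ws \<Rightarrow> (if y = inv_letter x then ws else x # w))"

definition mul :: "letter list \<Rightarrow> letter list \<Rightarrow> letter list" where
  "mul u v = foldr mul_letter u v"

definition inv :: "letter list \<Rightarrow> letter list" where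
  "inv w = rev (map inv_letter w)"

definition is_subgroup :: "letter list set \<Rightarrow> bool" where
  "is_subgroup K \<longleftrightarrow> K \<subseteq> F2 \<and> [] \<in> K \<and> (\<forall>x\<in>K. \<forall>y\<in>K. mul x y \<in> K) \<and> (\<forall>x\<in>K. inv x \<in> K)"

definition lcoset :: "letter list \<Rightarrow> letter list set \<Rightarrow> letter list set" where
  "lcoset z K = mul z ` K"

definition lcosets :: "letter list set \<Rightarrow> letter list set set" where
  "lcosets K = {lcoset z K | z. z \<in> F2}"

definition index :: "letter list set \<Rightarrow> nat" where
  "index K = card (lcosets K)"

definition sphere :: "nat \<Rightarrow> letter list set" where
  "sphere n = {w \<in> F2. length w = n}"

definition dens :: "nat \<Rightarrow> letter \<Rightarrow> letter list set \<Rightarrow> real" where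
  "dens n h A = (1/2) * (real (card (A \<inter> sphere n)) / real (card (sphere n))
                 + real (card (A \<inter> mul [h] ` sphere n)) / real (card (sphere n)))"

end

theory Submission
  imports Defs "HOL-Library.FuncSet"
begin

lemma il_il[simp]: "inv_letter (inv_letter x) = x" by (simp add: inv_letter_def)
lemma il_neq[simp]: "inv_letter x \<noteq> x" "x \<noteq> inv_letter x"
  by (cases x; simp add: inv_letter_def)+
lemma il_eq_iff[simp]: "inv_letter x = inv_letter y \<longleftrightarrow> x = y"
  by (metis il_il)
lemma il_swap: "x = inv_letter y \<longleftrightarrow> y = inv_letter x"
  by (metis il_il)

lemma two_avoid: "\<exists>x::letter. x \<noteq> p \<and> x \<noteq> q"
proof -
  have "(False,False) \<notin> {p,q} \<or> (False,True) \<notin> {p,q} \<or> (True,False) \<notin> {p,q}" by auto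
  thus ?thesis by blast
qed

lemma reduced_Nil[simp]: "reduced []" by (simp add: reduced_def)
lemma reduced_single[simp]: "reduced [x]" by (simp add: reduced_def)

lemma reduced_Cons: "reduced (x # w) \<longleftrightarrow> reduced w \<and> (w = [] \<or> hd w \<noteq> inv_letter x)"
proof
  assume r: "reduced (x # w)"
  have "reduced w" unfolding reduced_def
  proof (intro allI impI)
    fix i assume "Suc i < length w"
    thus "w ! Suc i \<noteq> inv_letter (w ! i)" using r[unfolded reduced_def, rule_format, of "Suc i"] by simp
  qed
  moreover have "w = [] \<or> hd w \<noteq> inv_letter x"
  proof (cases w)
    case (Cons y ys) thus ?thesis using r[unfolded reduced_def, rule_format, of 0] by simp
  qed simp
  ultimately show "reduced w \<and> (w = [] \<or> hd w \<noteq> inv_letter x)" by simp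
next
  assume a: "reduced w \<and> (w = [] \<or> hd w \<noteq> inv_letter x)"
  show "reduced (x # w)" unfolding reduced_def
  proof (intro allI impI)
    fix i assume i: "Suc i < length (x # w)"
    show "(x # w) ! Suc i \<noteq> inv_letter ((x # w) ! i)"
    proof (cases i)
      case 0 thus ?thesis using a i by (cases w) auto
    next
      case (Suc j) thus ?thesis using a i unfolding reduced_def by auto
    qed
  qed
qed

lemma reduced_append: "reduced (u @ v) \<longleftrightarrow> reduced u \<and> reduced v \<and> (u = [] \<or> v = [] \<or> hd v \<noteq> inv_letter (last u))"
proof (induction u)
  case Nil thus ?case by simp
next
  case (Cons x u) thus ?case by (cases u; cases v; auto simp: reduced_Cons)
qed

lemma reduced_snoc_iff: "v \<noteq> [] \<Longrightarrow> reduced (u @ v) \<longleftrightarrow> reduced (u @ [hd v]) \<and> reduced v"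
  by (auto simp: reduced_append)

lemma mul_Nil[simp]: "mul [] v = v" by (simp add: mul_def)
lemma mul_Cons[simp]: "mul (x # u) v = mul_letter x (mul u v)" by (simp add: mul_def)
lemma mul_append[simp]: "mul (u @ u') v = mul u (mul u' v)" by (simp add: mul_def)

lemma mul_letter_reduced: "reduced w \<Longrightarrow> reduced (mul_letter x w)"
  by (cases w) (auto simp: mul_letter_def reduced_Cons)

lemma mul_reduced: "reduced v \<Longrightarrow> reduced (mul u v)"
  by (induction u) (auto simp: mul_letter_reduced)

lemma mul_letter_nocancel: "w = [] \<or> hd w \<noteq> inv_letter x \<Longrightarrow> mul_letter x w = x # w"
  by (cases w) (auto simp: mul_letter_def)

lemma mul_letter_cancel: "reduced w \<Longrightarrow> mul_letter (inv_letter x) (mul_letter x w) = w"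
proof (cases w)
  case Nil thus ?thesis by (simp add: mul_letter_def)
next
  case (Cons y ws)
  assume r: "reduced w"
  show ?thesis
  proof (cases "y = inv_letter x")
    case True
    then show ?thesis using r Cons by (cases ws) (auto simp: mul_letter_def reduced_Cons)
  next
    case False
    then show ?thesis using Cons by (simp add: mul_letter_def)
  qed
qed

lemma inv_Nil[simp]: "inv [] = []" by (simp add: inv_def)
lemma inv_Cons[simp]: "inv (x # u) = inv u @ [inv_letter x]" by (simp add: inv_def)
lemma inv_inv[simp]: "inv (inv u) = u" by (induction u) (auto simp: inv_def)
lemma length_inv[simp]: "length (inv u) = length u" by (simp add: inv_def)
lemma inv_replicate: "inv (replicate n x) = replicate n (inv_letter x)"
  by (simp add: inv_def)
lemma last_inv: "u \<noteq> [] \<Longrightarrow> last (inv u) = inv_letter (hd u)"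
  by (cases u) auto

lemma inv_reduced: "reduced u \<Longrightarrow> reduced (inv u)"
proof (induction u)
  case Nil thus ?case by simp
next
  case (Cons x u)
  hence r: "reduced u" "u = [] \<or> hd u \<noteq> inv_letter x" by (auto simp: reduced_Cons)
  show ?case
  proof (cases u)
    case Nil thus ?thesis by simp
  next
    case (Cons y ys)
    thus ?thesis using Cons.IH[OF r(1)] r(2) last_inv[of u]
      by (auto simp: reduced_append reduced_Cons)
  qed
qed

lemma mul_cancel: "reduced w \<Longrightarrow> mul (inv u) (mul u w) = w"
  by (induction u) (auto simp: mul_letter_cancel mul_reduced)

lemma mul_cancel2: "reduced w \<Longrightarrow> mul u (mul (inv u) w) = w"
  using mul_cancel[of w "inv u"] by simp

lemma mul_letter_mul: "reduced r \<Longrightarrow> reduced w \<Longrightarrow> mul (mul_letter x r) w = mul_letter x (mul r w)"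
proof (cases r)
  case Nil thus ?thesis by (simp add: mul_letter_def)
next
  case (Cons y r')
  assume rr: "reduced r" and rw: "reduced w"
  show ?thesis
  proof (cases "y = inv_letter x")
    case True
    have "reduced (mul r' w)" using rr Cons rw by (simp add: mul_reduced reduced_Cons)
    hence "mul_letter x (mul_letter (inv_letter x) (mul r' w)) = mul r' w"
      using mul_letter_cancel[of "mul r' w" "inv_letter x"] by simp
    thus ?thesis using True Cons by (simp add: mul_letter_def)
  next
    case False thus ?thesis using Cons by (simp add: mul_letter_def)
  qed
qed

lemma mul_assoc: "reduced v \<Longrightarrow> reduced w \<Longrightarrow> mul (mul u v) w = mul u (mul v w)"
  by (induction u) (auto simp: mul_letter_mul mul_reduced)

lemma mul_append_red: "reduced (u @ v) \<Longrightarrow> mul u v = u @ v"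
proof (induction u)
  case Nil thus ?case by simp
next
  case (Cons x u)
  hence r: "reduced (u @ v)" "u @ v = [] \<or> hd (u @ v) \<noteq> inv_letter x" by (auto simp: reduced_Cons)
  show ?case using Cons.IH[OF r(1)] r(2) by (simp add: mul_letter_nocancel)
qed

lemma mul_Nil_right: "reduced u \<Longrightarrow> mul u [] = u"
  using mul_append_red[of u "[]"] by simp

lemma even_mul_letter: "even (length (mul_letter x w)) \<longleftrightarrow> odd (length w)"
  by (cases w) (auto simp: mul_letter_def)

lemma even_mul: "even (length (mul u v)) \<longleftrightarrow> even (length u + length v)"
  by (induction u) (auto simp: even_mul_letter)



definition act :: "letter list \<Rightarrow> letter list set \<Rightarrow> letter list set" where
  "act u c = mul u ` c"

lemma act_append: "act (u @ v) c = act u (act v c)"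
  by (simp add: act_def image_image)
lemma act_Nil[simp]: "act [] c = c" by (simp add: act_def)
lemma act_Cons: "act (x # u) c = act [x] (act u c)"
  using act_append[of "[x]" u c] by simp

locale fg =
  fixes K :: "letter list set"
  assumes sub: "is_subgroup K" and fin: "finite (lcosets K)"
begin

abbreviation "C \<equiv> lcosets K"

lemma K_F2: "K \<subseteq> F2" and K_Nil: "[] \<in> K" and K_mul: "x \<in> K \<Longrightarrow> y \<in> K \<Longrightarrow> mul x y \<in> K"
  and K_inv: "x \<in> K \<Longrightarrow> inv x \<in> K"
  using sub by (auto simp: is_subgroup_def)

lemma K_red: "k \<in> K \<Longrightarrow> reduced k" using K_F2 by (auto simp: F2_def)

lemma act_lcoset: "reduced z \<Longrightarrow> act u (lcoset z K) = lcoset (mul u z) K"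
  unfolding act_def lcoset_def image_image
  by (rule image_cong) (auto simp: mul_assoc K_red)

lemma lcoset_Nil: "lcoset [] K = K" by (simp add: lcoset_def)

lemma lcoset_K: "k \<in> K \<Longrightarrow> lcoset k K = K"
proof
  assume k: "k \<in> K"
  show "lcoset k K \<subseteq> K" using k K_mul by (auto simp: lcoset_def)
  show "K \<subseteq> lcoset k K"
  proof
    fix k' assume k': "k' \<in> K"
    have "mul k (mul (inv k) k') = k'" using mul_cancel2 K_red[OF k'] by simp
    moreover have "mul (inv k) k' \<in> K" using K_mul K_inv k k' by simp
    ultimately show "k' \<in> lcoset k K" unfolding lcoset_def by (metis image_eqI)
  qed
qed

lemma in_lcoset_self: "reduced w \<Longrightarrow> w \<in> lcoset w K"
  unfolding lcoset_def using K_Nil mul_Nil_right by (metis image_eqI)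

lemma lcoset_F2: "lcoset z K \<subseteq> F2"
  using K_red mul_reduced by (auto simp: lcoset_def F2_def)

lemma mem_lcoset_iff: "reduced z \<Longrightarrow> reduced w \<Longrightarrow> w \<in> lcoset z K \<longleftrightarrow> lcoset w K = lcoset z K"
proof
  assume z: "reduced z" and w: "reduced w" and m: "w \<in> lcoset z K"
  then obtain k where k: "k \<in> K" "w = mul z k" by (auto simp: lcoset_def)
  have "lcoset w K = act z (lcoset k K)" using act_lcoset[OF K_red[OF k(1)]] k by simp
  also have "\<dots> = act z (lcoset [] K)" using lcoset_K[OF k(1)] lcoset_Nil by simp
  also have "\<dots> = lcoset z K" using act_lcoset[of "[]" z] mul_Nil_right[OF z] by simp
  finally show "lcoset w K = lcoset z K" .
next
  assume "reduced z" "reduced w" "lcoset w K = lcoset z K"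
  thus "w \<in> lcoset z K" using in_lcoset_self by metis
qed

lemma C_iff: "c \<in> C \<longleftrightarrow> (\<exists>z. reduced z \<and> c = lcoset z K)"
  by (auto simp: lcosets_def F2_def)

lemma mem_C_iff: "c \<in> C \<Longrightarrow> reduced w \<Longrightarrow> w \<in> c \<longleftrightarrow> lcoset w K = c"
  using mem_lcoset_iff C_iff by metis

lemma lcoset_in_C: "reduced w \<Longrightarrow> lcoset w K \<in> C"
  using C_iff by blast

lemma act_C: "c \<in> C \<Longrightarrow> act u c \<in> C"
  using C_iff act_lcoset mul_reduced by metis

lemma act_inv: "c \<in> C \<Longrightarrow> act (inv u) (act u c) = c"
  using C_iff act_lcoset mul_reduced mul_cancel by metis

lemma act_inv2: "c \<in> C \<Longrightarrow> act u (act (inv u) c) = c"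
  using act_inv[of c "inv u"] by simp

lemma act_letter_inv: "c \<in> C \<Longrightarrow> act [x] (act [inv_letter x] c) = c"
  using act_inv2[of c "[x]"] by (simp add: inv_def)

lemma act_letter_inv2: "c \<in> C \<Longrightarrow> act [inv_letter x] (act [x] c) = c"
  using act_inv[of c "[x]"] by (simp add: inv_def)

lemma C_nonempty: "K \<in> C" using lcoset_in_C[of "[]"] lcoset_Nil by simp

lemma mul_letter_in_iff: "c \<in> C \<Longrightarrow> reduced w \<Longrightarrow> mul [x] w \<in> c \<longleftrightarrow> w \<in> act [inv_letter x] c"
proof -
  assume c: "c \<in> C" and w: "reduced w"
  have "mul [x] w \<in> c \<longleftrightarrow> act [x] (lcoset w K) = c"
    using mem_C_iff[OF c mul_reduced[OF w, of "[x]"]] act_lcoset[OF w, of "[x]"] by simp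
  also have "\<dots> \<longleftrightarrow> lcoset w K = act [inv_letter x] c"
  proof
    assume "act [x] (lcoset w K) = c"
    thus "lcoset w K = act [inv_letter x] c" using act_letter_inv2[OF lcoset_in_C[OF w], of x] by simp
  next
    assume "lcoset w K = act [inv_letter x] c"
    thus "act [x] (lcoset w K) = c" using act_letter_inv[OF c, of x] by simp
  qed
  also have "\<dots> \<longleftrightarrow> w \<in> act [inv_letter x] c"
    using mem_C_iff[OF act_C[OF c] w] by auto
  finally show ?thesis .
qed

definition triv :: "letter list \<Rightarrow> bool" where
  "triv u \<longleftrightarrow> (\<forall>c\<in>C. act u c = c)"

lemma triv_append: "triv u \<Longrightarrow> triv v \<Longrightarrow> triv (u @ v)"
  unfolding triv_def act_append using act_C by simp

lemma triv_Nil: "triv []" by (simp add: triv_def)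

lemma triv_concat: "triv u \<Longrightarrow> triv (concat (replicate n u))"
proof (induction n)
  case 0 thus ?case by (simp add: triv_Nil)
next
  case (Suc n) thus ?case using triv_append[of u "concat (replicate n u)"] by simp
qed

end

context fg begin

lemma triv_conj: "triv u \<Longrightarrow> triv ([y] @ u @ [inv_letter y])"
proof -
  assume tu: "triv u"
  have "act ([y] @ u @ [inv_letter y]) c = c" if c: "c \<in> C" for c
  proof -
    have "act ([y] @ u @ [inv_letter y]) c = act [y] (act u (act [inv_letter y] c))"
      by (simp only: act_append)
    also have "act u (act [inv_letter y] c) = act [inv_letter y] c"
      using tu act_C[OF c] unfolding triv_def by blast
    also have "act [y] (act [inv_letter y] c) = c" using act_letter_inv[OF c] .
    finally show ?thesis .
  qed
  thus ?thesis unfolding triv_def by blast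
qed

lemma power_triv: "\<exists>k\<ge>1. triv (replicate k x)"
proof -
  define F where "F i = restrict (\<lambda>c. act (replicate i x) c) C" for i
  have "F i \<in> C \<rightarrow>\<^sub>E C" for i unfolding F_def using act_C by (simp add: restrict_PiE_iff)
  hence rs: "range F \<subseteq> C \<rightarrow>\<^sub>E C" by blast
  have "finite (C \<rightarrow>\<^sub>E C)" by (rule finite_PiE) (use fin in auto)
  hence fr: "finite (range F)" using finite_subset[OF rs] by blast
  have "\<not> inj F"
  proof
    assume "inj F"
    hence "finite (UNIV :: nat set)" using finite_imageD[OF fr] by blast
    thus False by simp
  qed
  then obtain i0 j0 where ij0: "F i0 = F j0" "i0 \<noteq> j0" unfolding inj_def by blast
  obtain i j where ij: "F i = F j" "i < j"
  proof (cases "i0 < j0")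
    case True thus ?thesis using ij0 that by blast
  next
    case False thus ?thesis using ij0 that[of j0 i0] by simp
  qed
  have eq: "act (replicate j x) c = act (replicate i x) c" if "c \<in> C" for c
    using fun_cong[OF ij(1), of c] that by (simp add: F_def)
  have "act (replicate (j - i) x) c = c" if c: "c \<in> C" for c
  proof -
    define c0 where "c0 = act (inv (replicate i x)) c"
    have c0: "c0 \<in> C" "act (replicate i x) c0 = c" using c act_C act_inv2 by (auto simp: c0_def)
    have "replicate j x = replicate (j - i) x @ replicate i x"
      using ij(2) by (metis le_add_diff_inverse2 less_imp_le replicate_add)
    hence "act (replicate j x) c0 = act (replicate (j-i) x) c" using c0 by (simp add: act_append)
    thus "act (replicate (j - i) x) c = c" using eq[OF c0(1)] c0 by simp
  qed
  hence "triv (replicate (j - i) x)" unfolding triv_def by blast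
  thus ?thesis using ij(2) by (intro exI[of _ "j - i"]) auto
qed

end

context fg begin
lemma power_triv_mult: "triv (replicate k x) \<Longrightarrow> triv (replicate (k * m) x)"
proof (induction m)
  case 0 thus ?case by (simp add: triv_Nil)
next
  case (Suc m)
  have "replicate (k * Suc m) x = replicate k x @ replicate (k * m) x" by (simp add: replicate_add)
  thus ?case using Suc triv_append by simp
qed

lemma reduced_replicate: "reduced (replicate n x)"
  by (induction n) (auto simp: reduced_Cons)

lemma reduced_concat_rep: "reduced u \<Longrightarrow> u \<noteq> [] \<Longrightarrow> hd u \<noteq> inv_letter (last u) \<Longrightarrow> reduced (concat (replicate n u))"
proof (induction n)
  case 0 thus ?case by simp
next
  case (Suc n)
  thus ?case by (cases n) (auto simp: reduced_append)
qed

lemma last_concat_rep: "U \<noteq> [] \<Longrightarrow> n > 0 \<Longrightarrow> last (concat (replicate n U)) = last U"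
proof (induction n)
  case (Suc n) thus ?case by (cases n) (auto simp: last_append)
qed simp

lemma block: "\<exists>N0. \<forall>N\<ge>N0. \<exists>T. length T = 2 * N \<and> reduced T \<and> T \<noteq> [] \<and> hd T = x \<and> last T = x \<and> triv T"
proof -
  obtain k where k: "k \<ge> 1" "triv (replicate k x)" using power_triv by blast
  obtain y where y: "y \<noteq> x" "y \<noteq> inv_letter x" using two_avoid by blast
  define q where "q = k"
  define X where "X = replicate (2*q) x"
  define U where "U = [y] @ X @ [inv_letter y] @ X"
  have tX: "triv X" unfolding X_def using power_triv_mult[OF k(2), of 2] by (simp add: q_def mult.commute)
  have tU: "triv U" unfolding U_def using triv_append[OF triv_conj[OF tX, of y] tX] by simp
  have XU: "X \<noteq> []" "hd X = x" "last X = x" "reduced X" using k by (auto simp: X_def q_def reduced_replicate)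
  have lX: "length X = 2*q" by (simp add: X_def)
  have rU: "reduced U" "U \<noteq> []" "hd U = y" "last U = x" "length U = 4*q+2"
    using XU y il_swap[of x y] lX by (auto simp: U_def reduced_append reduced_Cons)
  show ?thesis
  proof (intro exI[of _ "2*q*q"] allI impI)
    fix N assume N: "N \<ge> 2*q*q"
    define b where "b = N mod q"
    define a where "a = N div q - 2 * b"
    have qpos: "q > 0" using k q_def by simp
    have "b < q" using qpos b_def by simp
    have "(2*q*q) div q \<le> N div q" using div_le_mono[OF N] .
    hence "N div q \<ge> 2*q" using qpos by simp
    hence a1: "a \<ge> 1" and d: "N div q = a + 2 * b" using \<open>b < q\<close> by (simp_all add: a_def)
    have "N = q * (N div q) + N mod q" by simp
    hence Neq: "N = q * a + (2*q+1) * b" unfolding d b_def[symmetric] by (simp add: algebra_simps)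
    define T where "T = concat (replicate a X) @ concat (replicate b U)"
    have A: "concat (replicate a X) = replicate (2*q*a) x"
      unfolding X_def by (induction a) (auto simp: replicate_add)
    have lenT: "length T = 2 * N"
    proof -
      have "length (concat (replicate b U)) = b * (4*q+2)"
        using rU(5) by (induction b) auto
      thus ?thesis unfolding T_def A using Neq by (simp add: algebra_simps)
    qed
    have hdA: "hd (replicate (2*q*a) x) = x" "last (replicate (2*q*a) x) = x" "replicate (2*q*a) x \<noteq> []"
      using a1 qpos by auto
    have rB: "reduced (concat (replicate b U))"
      using reduced_concat_rep[OF rU(1) rU(2)] rU y by simp
    have lastB: "b > 0 \<Longrightarrow> last (concat (replicate b U)) = x \<and> hd (concat (replicate b U)) = y"
      using rU last_concat_rep[OF rU(2), of b] by (cases b) auto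
    have rT: "reduced T"
      unfolding T_def A reduced_append using rB reduced_replicate hdA lastB y
      by (cases b) auto
    have "triv T" unfolding T_def using triv_append triv_concat tX tU by simp
    moreover have "T \<noteq> []" "hd T = x" unfolding T_def A using hdA by auto
    moreover have "last T = x"
    proof (cases "b = 0")
      case True thus ?thesis unfolding T_def A using hdA by simp
    next
      case False
      hence "concat (replicate b U) \<noteq> []" using rU(2) by (cases b) auto
      thus ?thesis unfolding T_def A using lastB False by (simp add: last_append)
    qed
    ultimately show "\<exists>T. length T = 2 * N \<and> reduced T \<and> T \<noteq> [] \<and> hd T = x \<and> last T = x \<and> triv T"
      using lenT rT by blast
  qed
qed

end

context fg begin

definition UU :: "nat \<Rightarrow> letter \<Rightarrow> letter list set" where
  "UU L l = {u. length u = L \<and> reduced (u @ [l])}"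

lemma pair_common:
  assumes w: "reduced w" "w \<noteq> []" and w': "reduced w'" "w' \<noteq> []"
    and par: "even (length w) = even (length w')"
  shows "\<exists>L\<ge>1. \<exists>u0\<in>UU L (hd w). \<exists>u0'\<in>UU L (hd w').
           act u0 (lcoset w K) = act u0' (lcoset w' K) \<and> hd u0 = hd u0'"
proof -
  define d where "d = mul w (inv w')"
  have rd: "reduced d" unfolding d_def using mul_reduced inv_reduced w' by blast
  have ed: "even (length d)" unfolding d_def using par by (simp add: even_mul)
  have "mul (inv w') w' = []"
    using mul_cancel[of "[]" w'] mul_Nil_right[OF w'(1)] by simp
  hence "mul d w' = w" unfolding d_def
    using mul_assoc[OF inv_reduced[OF w'(1)] w'(1), of w] mul_Nil_right[OF w(1)] by simp
  hence actd: "act d (lcoset w' K) = lcoset w K" using act_lcoset[OF w'(1)] by simp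
  obtain x1 where x1: "x1 \<noteq> inv_letter (hd w)" using two_avoid by blast
  obtain x2 where x2: "x2 \<noteq> inv_letter (hd w')"
      "x2 \<noteq> (if d = [] then inv_letter (hd w') else inv_letter (last d))"
    using two_avoid by blast
  obtain N1 where N1: "\<forall>N\<ge>N1. \<exists>T. length T = 2 * N \<and> reduced T \<and> T \<noteq> [] \<and> hd T = x1 \<and> last T = x1 \<and> triv T"
    using block by blast
  obtain N2 where N2: "\<forall>N\<ge>N2. \<exists>T. length T = 2 * N \<and> reduced T \<and> T \<noteq> [] \<and> hd T = x2 \<and> last T = x2 \<and> triv T"
    using block by blast
  define N0 where "N0 = N1 + N2"
  obtain T2 where T2: "length T2 = 2 * N0" "reduced T2" "T2 \<noteq> []" "hd T2 = x2" "last T2 = x2" "triv T2"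
    using N2[rule_format, of N0] N0_def by auto
  obtain T1 where T1: "length T1 = 2 * (length d div 2 + N0)" "reduced T1" "T1 \<noteq> []" "hd T1 = x1" "last T1 = x1" "triv T1"
    using N1[rule_format, of "length d div 2 + N0"] N0_def by auto
  define D where "D = d @ T2"
  have hdD: "hd D = (if d = [] then x2 else hd d)" unfolding D_def using T2 by auto
  obtain e where e: "e \<noteq> inv_letter x1" "e \<noteq> inv_letter (hd D)" using two_avoid by blast
  define u0 where "u0 = e # T1"
  define u0' where "u0' = e # D"
  have len: "length u0 = length u0'"
    unfolding u0_def u0'_def D_def using T1(1) T2(1) ed by auto
  have r1: "reduced (u0 @ [hd w])"
    unfolding u0_def using T1 x1 e il_swap[of x1 "hd w"] il_swap[of e x1]
    by (auto simp: reduced_Cons reduced_append)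
  have rD: "reduced (D @ [hd w'])"
  proof (cases "d = []")
    case True thus ?thesis unfolding D_def using T2 x2 il_swap[of x2 "hd w'"]
      by (auto simp: reduced_append)
  next
    case False thus ?thesis unfolding D_def using T2 x2 rd il_swap[of x2 "hd w'"] il_swap[of x2 "last d"]
      by (auto simp: reduced_append)
  qed
  have r2: "reduced (u0' @ [hd w'])"
  proof -
    have hh: "hd (D @ [hd w']) = hd D" unfolding D_def using T2(3) by (simp add: hd_append)
    show ?thesis unfolding u0'_def using rD e il_swap[of e "hd D"] hh
      by (simp add: reduced_Cons)
  qed
  have C1: "lcoset w K \<in> C" "lcoset w' K \<in> C" using lcoset_in_C w w' by auto
  have a1: "act u0 (lcoset w K) = act [e] (lcoset w K)"
    unfolding u0_def using T1(6) C1 act_Cons[of e T1] unfolding triv_def by simp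
  have a2: "act u0' (lcoset w' K) = act [e] (lcoset w K)"
  proof -
    have "act u0' (lcoset w' K) = act [e] (act d (act T2 (lcoset w' K)))"
      unfolding u0'_def D_def using act_Cons[of e "d @ T2"] act_append by simp
    also have "act T2 (lcoset w' K) = lcoset w' K" using T2(6) C1 unfolding triv_def by simp
    finally show ?thesis using actd by simp
  qed
  show ?thesis
    using len r1 r2 a1 a2
    by (intro exI[of _ "length u0"] conjI bexI[of _ u0] bexI[of _ u0'])
       (auto simp: UU_def u0_def u0'_def)
qed

end


lemma card_letters: "card (UNIV :: letter set) = 4"
  by (simp add: UNIV_Times_UNIV[symmetric] card_cartesian_product del: UNIV_Times_UNIV)

lemma card_avoid: "card {x::letter. x \<noteq> a} = 3"
proof -
  have "{x::letter. x \<noteq> a} = UNIV - {a}" by auto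
  thus ?thesis using card_letters by (simp add: card_Diff_singleton)
qed

lemma finite_lists_len: "finite {w :: letter list. length w = n}"
  using finite_lists_length_eq[of "UNIV :: letter set" n] by simp

lemma finite_sphere: "finite (sphere n)"
  by (rule finite_subset[OF _ finite_lists_len[of n]]) (auto simp: sphere_def)

lemma sphere_nonempty: "card (sphere n) > 0"
proof -
  have "replicate n (False,False) \<in> sphere n"
    by (simp add: sphere_def F2_def reduced_def)
  thus ?thesis using finite_sphere card_gt_0_iff by blast
qed

context fg begin

lemma finite_UU: "finite (UU L l)"
  by (rule finite_subset[OF _ finite_lists_len[of L]]) (auto simp: UU_def)

lemma card_UU: "card (UU L l) = 3 ^ L"
proof (induction L arbitrary: l)
  case 0
  have "UU 0 l = {[]}" by (auto simp: UU_def)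
  thus ?case by simp
next
  case (Suc L)
  define S where "S = (SIGMA u:UU L l. {x. x \<noteq> inv_letter (hd (u @ [l]))})"
  have eq: "UU (Suc L) l = (\<lambda>(u,x). x # u) ` S"
  proof
    show "UU (Suc L) l \<subseteq> (\<lambda>(u,x). x # u) ` S"
    proof
      fix w assume "w \<in> UU (Suc L) l"
      then obtain x u where w: "w = x # u" "length u = L" "reduced (x # (u @ [l]))"
        by (cases w) (auto simp: UU_def)
      hence "reduced (u @ [l])" "hd (u @ [l]) \<noteq> inv_letter x" by (auto simp: reduced_Cons)
      hence "(u, x) \<in> S" using w il_swap[of x "hd (u @ [l])"] by (auto simp: S_def UU_def)
      thus "w \<in> (\<lambda>(u,x). x # u) ` S" using w by force
    qed
    show "(\<lambda>(u,x). x # u) ` S \<subseteq> UU (Suc L) l"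
    proof
      fix w assume "w \<in> (\<lambda>(u,x). x # u) ` S"
      then obtain u x where ux: "(u,x) \<in> S" "w = x # u" by auto
      thus "w \<in> UU (Suc L) l" using il_swap[of x "hd (u @ [l])"]
        by (auto simp: S_def UU_def reduced_Cons)
    qed
  qed
  have inj: "inj_on (\<lambda>(u,x). x # u) S" by (auto simp: inj_on_def)
  have "card S = (\<Sum>u\<in>UU L l. card {x. x \<noteq> inv_letter (hd (u @ [l]))})"
    unfolding S_def by (rule card_SigmaI) (auto simp: finite_UU)
  also have "\<dots> = 3 * 3 ^ L" using Suc.IH by (simp add: card_avoid)
  finally show ?case using eq card_image[OF inj] by simp
qed

lemma decomp:
  assumes n: "n \<ge> 1"
  shows "(\<Sum>w\<in>sphere (L + n). g w) = (\<Sum>v\<in>sphere n. \<Sum>u\<in>UU L (hd v). g (u @ v))"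
proof -
  have "(\<Sum>v\<in>sphere n. \<Sum>u\<in>UU L (hd v). g (u @ v)) = (\<Sum>(v,u)\<in>(SIGMA v:sphere n. UU L (hd v)). g (u @ v))"
    by (rule sum.Sigma) (auto simp: finite_sphere finite_UU)
  also have "\<dots> = (\<Sum>w\<in>sphere (L + n). g w)"
  proof (rule sum.reindex_bij_witness[where i = "\<lambda>w. (drop L w, take L w)" and j = "\<lambda>(v,u). u @ v"])
    fix a assume a: "a \<in> (SIGMA v:sphere n. UU L (hd v))"
    obtain v u where vu: "a = (v,u)" by (cases a)
    have "v \<in> sphere n" "u \<in> UU L (hd v)" using a vu by auto
    hence vv: "reduced v" "length v = n" "length u = L" "reduced (u @ [hd v])"
      by (auto simp: sphere_def F2_def UU_def)
    hence "v \<noteq> []" using n by auto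
    hence "reduced (u @ v)" using reduced_snoc_iff[of v u] vv by simp
    thus "(case a of (v, u) \<Rightarrow> u @ v) \<in> sphere (L + n)" using vu vv by (simp add: sphere_def F2_def)
    show "(drop L (case a of (v, u) \<Rightarrow> u @ v), take L (case a of (v, u) \<Rightarrow> u @ v)) = a"
      using vu vv by simp
    show "g (case a of (v, u) \<Rightarrow> u @ v) = (case a of (v, u) \<Rightarrow> g (u @ v))" using vu by simp
  next
    fix w assume w: "w \<in> sphere (L + n)"
    show "(case (drop L w, take L w) of (v, u) \<Rightarrow> u @ v) = w" by simp
    have rw: "reduced (take L w @ drop L w)" "length w = L + n" using w by (auto simp: sphere_def F2_def)
    hence ne: "drop L w \<noteq> []" using n by auto
    have "reduced (take L w @ [hd (drop L w)])" "reduced (drop L w)"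
      using reduced_snoc_iff[OF ne, of "take L w"] rw(1) by (simp_all only: append_take_drop_id)
    thus "(drop L w, take L w) \<in> (SIGMA v:sphere n. UU L (hd v))"
      using rw by (auto simp: sphere_def F2_def UU_def)
  qed
  finally show ?thesis by simp
qed

lemma card_sphere_mult: "n \<ge> 1 \<Longrightarrow> card (sphere (L + n)) = 3 ^ L * card (sphere n)"
  using decomp[where L=L and g="\<lambda>_. 1::nat"] by (simp add: card_UU)

definition st :: "letter list \<Rightarrow> letter list set \<times> letter" where
  "st w = (lcoset w K, hd w)"

definition E :: "nat \<Rightarrow> (letter list set \<times> letter \<Rightarrow> real) \<Rightarrow> real" where
  "E n f = (\<Sum>w\<in>sphere n. f (st w)) / real (card (sphere n))"

definition Q :: "nat \<Rightarrow> (letter list set \<times> letter \<Rightarrow> real) \<Rightarrow> letter list set \<times> letter \<Rightarrow> real" where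
  "Q L f s = (\<Sum>u\<in>UU L (snd s). f (act u (fst s), hd u)) / 3 ^ L"

lemma st_append:
  assumes "u \<in> UU L (hd v)" "reduced v" "v \<noteq> []" "L \<ge> 1"
  shows "st (u @ v) = (act u (fst (st v)), hd u)" "reduced (u @ v)"
proof -
  have u: "length u = L" "reduced (u @ [hd v])" using assms(1) by (auto simp: UU_def)
  show r: "reduced (u @ v)" using reduced_snoc_iff[OF assms(3)] u assms(2) by simp
  have "u \<noteq> []" using u assms(4) by auto
  thus "st (u @ v) = (act u (fst (st v)), hd u)"
    using mul_append_red[OF r] act_lcoset[OF assms(2), of u] by (simp add: st_def)
qed

lemma EQ: assumes "n \<ge> 1" "L \<ge> 1" shows "E (L + n) f = E n (Q L f)"
proof -
  have "(\<Sum>w\<in>sphere (L + n). f (st w)) = (\<Sum>v\<in>sphere n. \<Sum>u\<in>UU L (hd v). f (st (u @ v)))"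
    using decomp[OF assms(1)] .
  also have "\<dots> = (\<Sum>v\<in>sphere n. 3 ^ L * Q L f (st v))"
  proof (rule sum.cong[OF refl])
    fix v assume v: "v \<in> sphere n"
    hence vv: "reduced v" "v \<noteq> []" using assms(1) by (auto simp: sphere_def F2_def)
    have "(\<Sum>u\<in>UU L (hd v). f (st (u @ v))) = (\<Sum>u\<in>UU L (hd v). f (act u (fst (st v)), hd u))"
      by (rule sum.cong[OF refl]) (use st_append vv assms(2) in auto)
    thus "(\<Sum>u\<in>UU L (hd v). f (st (u @ v))) = 3 ^ L * Q L f (st v)"
      by (simp add: Q_def st_def)
  qed
  also have "\<dots> = 3 ^ L * (\<Sum>v\<in>sphere n. Q L f (st v))" by (simp add: sum_distrib_left)
  finally show ?thesis
    unfolding E_def using card_sphere_mult[OF assms(1), of L] by simp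
qed

end


lemma avg_diff:
  fixes F G :: "'a \<Rightarrow> real"
  assumes A: "finite A" and B: "finite B" and r: "\<forall>a\<in>A. \<forall>b\<in>B. \<bar>F a - G b\<bar> \<le> r"
  shows "\<bar>real (card B) * sum F A - real (card A) * sum G B\<bar> \<le> real (card A) * real (card B) * r"
proof -
  have e1: "(\<Sum>a\<in>A. \<Sum>b\<in>B. F a) = real (card B) * sum F A"
    by (simp add: sum_distrib_left)
  have e2: "(\<Sum>a\<in>A. \<Sum>b\<in>B. G b) = real (card A) * sum G B" by simp
  have "real (card B) * sum F A - real (card A) * sum G B = (\<Sum>a\<in>A. \<Sum>b\<in>B. F a - G b)"
    unfolding e1[symmetric] e2[symmetric] by (simp add: sum_subtractf)
  also have "\<bar>\<dots>\<bar> \<le> (\<Sum>a\<in>A. \<Sum>b\<in>B. \<bar>F a - G b\<bar>)"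
    by (rule order_trans[OF sum_abs sum_mono]) (rule sum_abs)
  also have "\<dots> \<le> (\<Sum>a\<in>A. \<Sum>b\<in>B. r)"
    by (intro sum_mono) (use r in auto)
  also have "\<dots> = real (card A) * real (card B) * r" by simp
  finally show ?thesis .
qed

context fg begin

definition Cl :: "bool \<Rightarrow> (letter list set \<times> letter) set" where
  "Cl p = st ` {w. reduced w \<and> w \<noteq> [] \<and> even (length w) = p}"

definition OSC :: "bool \<Rightarrow> (letter list set \<times> letter \<Rightarrow> real) \<Rightarrow> real \<Rightarrow> bool" where
  "OSC p f r \<longleftrightarrow> (\<forall>s\<in>Cl p. \<forall>s'\<in>Cl p. \<bar>f s - f s'\<bar> \<le> r)"

definition PP :: "nat \<Rightarrow> letter list set \<times> letter \<Rightarrow> letter list set \<times> letter \<Rightarrow> bool" where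
  "PP L s s' \<longleftrightarrow> (\<exists>u0\<in>UU L (snd s). \<exists>u0'\<in>UU L (snd s'). act u0 (fst s) = act u0' (fst s') \<and> hd u0 = hd u0')"

definition DP :: "nat \<Rightarrow> bool \<Rightarrow> bool" where
  "DP L p \<longleftrightarrow> (\<forall>s\<in>Cl p. \<forall>s'\<in>Cl p. PP L s s')"

lemma sphere_Cl: "n \<ge> 1 \<Longrightarrow> w \<in> sphere n \<Longrightarrow> st w \<in> Cl (even n)"
  by (auto simp: Cl_def sphere_def F2_def)

lemma EE:
  assumes n: "n \<ge> 1" "n' \<ge> 1" "even n = p" "even n' = p" and osc: "OSC p g r"
  shows "\<bar>E n g - E n' g\<bar> \<le> r"
proof -
  define a where "a = real (card (sphere n))"
  define b where "b = real (card (sphere n'))"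
  define X where "X = (\<Sum>w\<in>sphere n. g (st w))"
  define Y where "Y = (\<Sum>w\<in>sphere n'. g (st w))"
  have ab: "a > 0" "b > 0" using sphere_nonempty by (auto simp: a_def b_def)
  have bound: "\<forall>w\<in>sphere n. \<forall>w'\<in>sphere n'. \<bar>g (st w) - g (st w')\<bar> \<le> r"
  proof (intro ballI)
    fix w w' assume w: "w \<in> sphere n" and w': "w' \<in> sphere n'"
    have "st w \<in> Cl p" using sphere_Cl[OF n(1) w] n(3) by simp
    moreover have "st w' \<in> Cl p" using sphere_Cl[OF n(2) w'] n(4) by simp
    ultimately show "\<bar>g (st w) - g (st w')\<bar> \<le> r" using osc unfolding OSC_def by blast
  qed
  have bd: "\<bar>b * X - a * Y\<bar> \<le> a * b * r"
    using avg_diff[OF finite_sphere finite_sphere bound] unfolding a_def b_def X_def Y_def .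
  have "E n g - E n' g = X / a - Y / b" unfolding E_def X_def Y_def a_def b_def by simp
  also have "X / a - Y / b = (b * X - a * Y) / (a * b)" using ab by (simp add: divide_simps)
  finally have "E n g - E n' g = (b * X - a * Y) / (a * b)" .
  thus ?thesis using ab bd
    by (simp add: abs_divide pos_divide_le_eq mult_ac)
qed

lemma target_Cl:
  assumes "s \<in> Cl p" "u \<in> UU L (snd s)" "L \<ge> 1" "even L"
  shows "(act u (fst s), hd u) \<in> Cl p"
proof -
  obtain w where w: "s = st w" "reduced w" "w \<noteq> []" "even (length w) = p" using assms(1) by (auto simp: Cl_def)
  have u: "u \<in> UU L (hd w)" "length u = L" using assms(2) w by (auto simp: st_def UU_def)
  have "st (u @ w) = (act u (fst s), hd u)" "reduced (u @ w)" using st_append[OF u(1) w(2,3) assms(3)] w by auto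
  moreover have "even (length (u @ w)) = p" using u(2) assms(4) w(4) by simp
  ultimately show ?thesis using w(3) unfolding Cl_def
    by (intro image_eqI[of _ _ "u @ w"]) auto
qed

lemma CON:
  assumes L: "L \<ge> 1" "even L" and dp: "DP L p" and osc: "OSC p f r"
  shows "OSC p (Q L f) ((1 - 1 / 3 ^ L) * r)"
  unfolding OSC_def
proof (intro ballI)
  fix s s' assume s: "s \<in> Cl p" and s': "s' \<in> Cl p"
  obtain u0 u0' where u0: "u0 \<in> UU L (snd s)" "u0' \<in> UU L (snd s')"
      "act u0 (fst s) = act u0' (fst s')" "hd u0 = hd u0'"
    using dp s s' unfolding DP_def PP_def by blast
  define N :: real where "N = 3 ^ L"
  define A where "A = UU L (snd s) - {u0}"
  define B where "B = UU L (snd s') - {u0'}"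
  define F where "F u = f (act u (fst s), hd u)" for u
  define G where "G u = f (act u (fst s'), hd u)" for u
  have cA: "real (card A) = N - 1" unfolding A_def N_def using u0(1) finite_UU card_UU
    by (simp add: card_Diff_singleton of_nat_diff)
  have cB: "real (card B) = N - 1" unfolding B_def N_def using u0(2) finite_UU card_UU
    by (simp add: card_Diff_singleton of_nat_diff)
  have N3: "N \<ge> 3" unfolding N_def using L(1)
    using power_increasing[OF L(1), of "3::real"] by simp
  have Qs: "Q L f s = (F u0 + sum F A) / N"
    unfolding Q_def N_def A_def F_def using sum.remove[OF finite_UU u0(1)] by simp
  have Qs': "Q L f s' = (F u0 + sum G B) / N"
    unfolding Q_def N_def B_def F_def G_def using sum.remove[OF finite_UU u0(2)] u0(3,4) by simp
  have "\<bar>real (card B) * sum F A - real (card A) * sum G B\<bar> \<le> real (card A) * real (card B) * r"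
  proof (rule avg_diff)
    show "finite A" "finite B" unfolding A_def B_def using finite_UU by auto
    show "\<forall>a\<in>A. \<forall>b\<in>B. \<bar>F a - G b\<bar> \<le> r"
      using osc target_Cl[OF s _ L] target_Cl[OF s' _ L] unfolding OSC_def A_def B_def F_def G_def by blast
  qed
  hence "(N - 1) * \<bar>sum F A - sum G B\<bar> \<le> (N - 1) * ((N - 1) * r)"
    unfolding cA cB using N3 by (simp add: abs_mult right_diff_distrib[symmetric] mult.assoc)
  hence "\<bar>sum F A - sum G B\<bar> \<le> (N - 1) * r" using N3 by (simp add: mult_le_cancel_left)
  moreover have "Q L f s - Q L f s' = (sum F A - sum G B) / N" unfolding Qs Qs' using N3 by (simp add: field_simps)
  ultimately have "\<bar>Q L f s - Q L f s'\<bar> \<le> (N - 1) * r / N" using N3 by (simp add: abs_divide divide_right_mono)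
  also have "(N - 1) * r / N = (1 - 1 / N) * r" using N3 by (simp add: field_simps)
  finally show "\<bar>Q L f s - Q L f s'\<bar> \<le> (1 - 1 / 3 ^ L) * r" by (simp add: N_def)
qed

end

context fg begin

lemma OSC_iter:
  assumes L: "L \<ge> 1" "even L" and dp: "DP L p" and osc: "OSC p f r"
  shows "OSC p ((Q L ^^ j) f) ((1 - 1 / 3 ^ L) ^ j * r)"
proof (induction j)
  case 0 thus ?case using osc by simp
next
  case (Suc j)
  have "OSC p (Q L ((Q L ^^ j) f)) ((1 - 1 / 3 ^ L) * ((1 - 1 / 3 ^ L) ^ j * r))"
    by (rule CON[OF L dp Suc.IH])
  thus ?case by (simp add: mult.assoc)
qed

lemma E_iter:
  assumes "n \<ge> 1" "L \<ge> 1"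
  shows "E (j * L + n) f = E n ((Q L ^^ j) f)"
proof (induction j arbitrary: f)
  case 0 thus ?case by simp
next
  case (Suc j)
  have "E (Suc j * L + n) f = E (L + (j * L + n)) f" by (simp add: algebra_simps)
  also have "\<dots> = E (j * L + n) (Q L f)" by (rule EQ) (use assms in auto)
  also have "\<dots> = E n ((Q L ^^ j) (Q L f))" by (rule Suc.IH)
  also have "\<dots> = E n ((Q L ^^ Suc j) f)" by (simp add: funpow_Suc_right del: funpow.simps)
  finally show ?case .
qed

lemma UU_Cons:
  assumes "u \<in> UU L l" "u \<noteq> []" "y \<noteq> inv_letter (hd u)"
  shows "y # u \<in> UU (Suc L) l"
proof -
  have u: "length u = L" "reduced (u @ [l])" using assms(1) by (auto simp: UU_def)
  have "hd (u @ [l]) = hd u" using assms(2) by simp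
  moreover have "hd u \<noteq> inv_letter y" using assms(3) il_swap[of "hd u" y] by blast
  ultimately have "reduced (y # (u @ [l]))" using u(2) by (simp add: reduced_Cons)
  thus ?thesis using u(1) by (simp add: UU_def)
qed

lemma PP_Suc:
  assumes "L \<ge> 1" "PP L s s'" shows "PP (Suc L) s s'"
proof -
  obtain u0 u0' where u0: "u0 \<in> UU L (snd s)" "u0' \<in> UU L (snd s')"
      "act u0 (fst s) = act u0' (fst s')" "hd u0 = hd u0'"
    using assms(2) unfolding PP_def by blast
  have ne: "u0 \<noteq> []" "u0' \<noteq> []" using u0(1,2) assms(1) by (auto simp: UU_def)
  obtain y where y: "y \<noteq> inv_letter (hd u0)" using two_avoid by blast
  have m1: "y # u0 \<in> UU (Suc L) (snd s)" using UU_Cons[OF u0(1) ne(1) y] .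
  have m2: "y # u0' \<in> UU (Suc L) (snd s')" using UU_Cons[OF u0(2) ne(2)] y u0(4) by simp
  have "act (y # u0) (fst s) = act (y # u0') (fst s')"
    using u0(3) act_Cons[of y u0] act_Cons[of y u0'] by simp
  thus ?thesis unfolding PP_def using m1 m2 by force
qed

lemma PP_mono: assumes "L \<ge> 1" "L \<le> L'" "PP L s s'" shows "PP L' s s'"
  using assms(2)
proof (induction rule: dec_induct)
  case base show ?case using assms(3) .
next
  case (step m) thus ?case using PP_Suc assms(1) by simp
qed

lemma finite_Cl: "finite (Cl p)"
proof (rule finite_subset[OF _ finite_cartesian_product[OF fin finite_UNIV]])
  show "Cl p \<subseteq> C \<times> UNIV" using lcoset_in_C by (auto simp: Cl_def st_def)
qed

lemma DP_exists: "\<exists>L\<ge>1. even L \<and> DP L p"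
proof -
  define P where "P = Cl p \<times> Cl p"
  have finP: "finite P" unfolding P_def using finite_Cl by simp
  have "\<forall>q\<in>P. \<exists>L. L \<ge> 1 \<and> PP L (fst q) (snd q)"
  proof
    fix q assume "q \<in> P"
    hence q: "fst q \<in> Cl p" "snd q \<in> Cl p" unfolding P_def by auto
    obtain w where w: "fst q = st w" "reduced w" "w \<noteq> []" "even (length w) = p"
      using q(1) unfolding Cl_def by blast
    obtain w' where w': "snd q = st w'" "reduced w'" "w' \<noteq> []" "even (length w') = p"
      using q(2) unfolding Cl_def by blast
    have par: "even (length w) = even (length w')" using w(4) w'(4) by simp
    obtain L u0 u0' where L: "L \<ge> 1" "u0 \<in> UU L (hd w)" "u0' \<in> UU L (hd w')"
        "act u0 (lcoset w K) = act u0' (lcoset w' K)" "hd u0 = hd u0'"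
      using pair_common[OF w(2,3) w'(2,3) par] by blast
    have "PP L (st w) (st w')" unfolding PP_def st_def fst_conv snd_conv
      using L(2-5) by blast
    thus "\<exists>L. L \<ge> 1 \<and> PP L (fst q) (snd q)" using w(1) w'(1) L(1) by auto
  qed
  from bchoice[OF this] obtain Lf where Lf: "\<forall>q\<in>P. Lf q \<ge> 1 \<and> PP (Lf q) (fst q) (snd q)" by blast
  define L where "L = 2 * (1 + sum Lf P)"
  have "DP L p" unfolding DP_def
  proof (intro ballI)
    fix s s' assume "s \<in> Cl p" "s' \<in> Cl p"
    hence q: "(s, s') \<in> P" unfolding P_def by simp
    have "Lf (s,s') \<le> sum Lf P" using member_le_sum[OF q _ finP, of Lf] by simp
    hence "Lf (s,s') \<le> L" unfolding L_def by simp
    thus "PP L s s'" using PP_mono[of "Lf (s,s')" L s s'] Lf q by auto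
  qed
  thus ?thesis unfolding L_def by (intro exI[of _ L]) (auto simp: L_def)
qed

lemma E_conv:
  assumes f: "\<And>s. 0 \<le> f s \<and> f s \<le> 1" and r: "r \<ge> 1"
  shows "convergent (\<lambda>i. E (2 * i + r) f)"
proof -
  define p where "p = even r"
  obtain L where L: "L \<ge> 1" "even L" "DP L p" using DP_exists by blast
  define \<theta> :: real where "\<theta> = 1 - 1 / 3 ^ L"
  have th: "\<theta> < 1" "0 \<le> \<theta>" unfolding \<theta>_def by auto
  have osc: "OSC p f 1" unfolding OSC_def
  proof (intro ballI)
    fix s s' :: "letter list set \<times> letter"
    have "0 \<le> f s" "f s \<le> 1" "0 \<le> f s'" "f s' \<le> 1" using f[of s] f[of s'] by auto
    thus "\<bar>f s - f s'\<bar> \<le> 1" by (simp add: abs_le_iff)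
  qed
  show ?thesis
  proof (rule Cauchy_convergent, rule CauchyI)
    fix e :: real assume e: "e > 0"
    obtain j where j: "\<theta> ^ j < e" using real_arch_pow_inv[OF e th(1)] by blast
    have bnd: "OSC p ((Q L ^^ j) f) (\<theta> ^ j)" using OSC_iter[OF L osc, of j] by (simp add: \<theta>_def)
    show "\<exists>M. \<forall>m\<ge>M. \<forall>n\<ge>M. norm (E (2 * m + r) f - E (2 * n + r) f) < e"
    proof (intro exI[of _ "j * L"] allI impI)
      fix m n assume m: "m \<ge> j * L" and n: "n \<ge> j * L"
      define a where "a = 2 * m + r - j * L"
      define b where "b = 2 * n + r - j * L"
      have a: "2 * m + r = j * L + a" "a \<ge> 1" "even a = p" using m r L(2) by (auto simp: a_def p_def)
      have b: "2 * n + r = j * L + b" "b \<ge> 1" "even b = p" using n r L(2) by (auto simp: b_def p_def)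
      have "\<bar>E a ((Q L ^^ j) f) - E b ((Q L ^^ j) f)\<bar> \<le> \<theta> ^ j"
        by (rule EE[OF a(2) b(2) a(3) b(3) bnd])
      thus "norm (E (2 * m + r) f - E (2 * n + r) f) < e"
        unfolding a(1) b(1) E_iter[OF a(2) L(1)] E_iter[OF b(2) L(1)] using j by simp
    qed
  qed
qed

end


lemma evenodd_lim:
  fixes f :: "nat \<Rightarrow> real"
  assumes e: "(\<lambda>i. f (2*i+2)) \<longlonglongrightarrow> l" and o: "(\<lambda>i. f (2*i+1)) \<longlonglongrightarrow> l"
  shows "f \<longlonglongrightarrow> l"
proof (rule LIMSEQ_I)
  fix r :: real assume r: "r > 0"
  obtain N1 where N1: "\<forall>i\<ge>N1. norm (f (2*i+2) - l) < r" using LIMSEQ_D[OF e r] by blast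
  obtain N2 where N2: "\<forall>i\<ge>N2. norm (f (2*i+1) - l) < r" using LIMSEQ_D[OF o r] by blast
  show "\<exists>no. \<forall>n\<ge>no. norm (f n - l) < r"
  proof (intro exI[of _ "2 * (N1 + N2) + 2"] allI impI)
    fix n assume n: "n \<ge> 2 * (N1 + N2) + 2"
    show "norm (f n - l) < r"
    proof (cases "even n")
      case True
      then obtain i where i: "n = 2 * i + 2" using n by (metis add.commute add_diff_inverse_nat dvd_diff_nat dvd_refl evenE le_add2 le_trans not_less)
      hence "i \<ge> N1" using n by simp
      thus ?thesis using N1 i by simp
    next
      case False
      then obtain i where i: "n = 2 * i + 1" using oddE by blast
      hence "i \<ge> N2" using n by simp
      thus ?thesis using N2 i by simp
    qed
  qed
qed

context fg begin

definition ind :: "letter list set \<Rightarrow> letter list set \<times> letter \<Rightarrow> real" where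
  "ind c s = (if fst s = c then 1 else 0)"

definition mu :: "nat \<Rightarrow> letter list set \<Rightarrow> real" where
  "mu n c = E n (ind c)"

definition cnt :: "nat \<Rightarrow> letter list set \<Rightarrow> real" where
  "cnt n c = (\<Sum>w\<in>sphere n. if w \<in> c then 1 else 0)"

lemma cnt_card: "cnt n c = real (card {w\<in>sphere n. w \<in> c})"
  unfolding cnt_def using sum.inter_filter[OF finite_sphere[of n], where g="\<lambda>_. 1::real" and P="\<lambda>w. w \<in> c"]
  by simp

lemma mu_cnt: "c \<in> C \<Longrightarrow> mu n c = cnt n c / real (card (sphere n))"
  unfolding mu_def E_def cnt_def ind_def
proof -
  assume c: "c \<in> C"
  have "(\<Sum>w\<in>sphere n. if fst (st w) = c then 1 else 0) = (\<Sum>w\<in>sphere n. if w \<in> c then 1 else (0::real))"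
  proof (rule sum.cong[OF refl])
    fix w assume "w \<in> sphere n"
    hence "reduced w" by (simp add: sphere_def F2_def)
    thus "(if fst (st w) = c then 1 else 0) = (if w \<in> c then 1 else (0::real))"
      using mem_C_iff[OF c] by (simp add: st_def)
  qed
  thus "(\<Sum>w\<in>sphere n. if fst (st w) = c then 1 else 0) / real (card (sphere n)) =
        (\<Sum>w\<in>sphere n. if w \<in> c then 1 else 0) / real (card (sphere n))" by simp
qed

lemma mu_sum: "(\<Sum>c\<in>C. mu n c) = 1"
proof -
  have "(\<Sum>c\<in>C. mu n c) = (\<Sum>c\<in>C. \<Sum>w\<in>sphere n. ind c (st w)) / real (card (sphere n))"
    unfolding mu_def E_def by (simp add: sum_divide_distrib)
  also have "(\<Sum>c\<in>C. \<Sum>w\<in>sphere n. ind c (st w)) = (\<Sum>w\<in>sphere n. \<Sum>c\<in>C. ind c (st w))"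
    by (rule sum.swap)
  also have "\<dots> = (\<Sum>w\<in>sphere n. 1)"
  proof (rule sum.cong[OF refl])
    fix w assume "w \<in> sphere n"
    hence "lcoset w K \<in> C" using lcoset_in_C by (simp add: sphere_def F2_def)
    thus "(\<Sum>c\<in>C. ind c (st w)) = 1" unfolding ind_def st_def fst_conv
      using sum.delta'[OF fin, of "lcoset w K" "\<lambda>_. 1::real"] by simp
  qed
  finally show ?thesis using sphere_nonempty[of n] by simp
qed

lemma ind_bounds: "0 \<le> ind c s \<and> ind c s \<le> 1" by (simp add: ind_def)

lemma UU1_sum: "(\<Sum>u\<in>UU 1 l. g u) = (\<Sum>x\<in>UNIV - {inv_letter l}. g [x])"
proof -
  have eq: "UU 1 l = (\<lambda>x. [x]) ` (UNIV - {inv_letter l})"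
  proof
    show "UU 1 l \<subseteq> (\<lambda>x. [x]) ` (UNIV - {inv_letter l})"
    proof
      fix u assume "u \<in> UU 1 l"
      hence u: "length u = 1" "reduced (u @ [l])" by (auto simp: UU_def)
      then obtain x where "u = [x]" by (cases u) auto
      hence x: "u = [x]" "reduced [x, l]" using u by auto
      hence "l \<noteq> inv_letter x" by (simp add: reduced_Cons)
      hence "x \<noteq> inv_letter l" by (metis il_il)
      thus "u \<in> (\<lambda>x. [x]) ` (UNIV - {inv_letter l})" using x by auto
    qed
    show "(\<lambda>x. [x]) ` (UNIV - {inv_letter l}) \<subseteq> UU 1 l"
    proof
      fix u assume "u \<in> (\<lambda>x. [x]) ` (UNIV - {inv_letter l})"
      then obtain x where x: "u = [x]" "x \<noteq> inv_letter l" by auto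
      hence "l \<noteq> inv_letter x" by (metis il_il)
      thus "u \<in> UU 1 l" using x by (simp add: UU_def reduced_Cons)
    qed
  qed
  show ?thesis unfolding eq by (subst sum.reindex) (auto simp: inj_on_def)
qed

lemma UU1_sum': "(\<Sum>u\<in>UU (Suc 0) l. g u) = (\<Sum>x\<in>UNIV - {inv_letter l}. g [x])"
  using UU1_sum by simp

lemma sum_letters_split:
  assumes "w \<noteq> []"
  shows "(\<Sum>x\<in>UNIV. g (mul_letter x w)) = g (tl w) + (\<Sum>x\<in>UNIV - {inv_letter (hd w)}. g (x # w))"
proof -
  have "(\<Sum>x\<in>UNIV. g (mul_letter x w)) = g (mul_letter (inv_letter (hd w)) w) + (\<Sum>x\<in>UNIV - {inv_letter (hd w)}. g (mul_letter x w))"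
    by (rule sum.remove) auto
  also have "mul_letter (inv_letter (hd w)) w = tl w" using assms by (cases w) (auto simp: mul_letter_def)
  also have "(\<Sum>x\<in>UNIV - {inv_letter (hd w)}. g (mul_letter x w)) = (\<Sum>x\<in>UNIV - {inv_letter (hd w)}. g (x # w))"
    by (rule sum.cong[OF refl]) (use il_swap in \<open>auto simp: mul_letter_nocancel\<close>)
  finally show ?thesis .
qed

lemma cnt_rec:
  assumes n: "n \<ge> 2" and c: "c \<in> C"
  shows "(\<Sum>x\<in>UNIV. cnt n (act [inv_letter x] c)) = cnt (Suc n) c + 3 * cnt (n - 1) c"
proof -
  define g where "g w = (if w \<in> c then 1 else (0::real))" for w
  have "(\<Sum>x\<in>UNIV. cnt n (act [inv_letter x] c)) = (\<Sum>x\<in>UNIV. \<Sum>w\<in>sphere n. g (mul_letter x w))"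
  proof (rule sum.cong[OF refl])
    fix x
    show "cnt n (act [inv_letter x] c) = (\<Sum>w\<in>sphere n. g (mul_letter x w))"
      unfolding cnt_def g_def
    proof (rule sum.cong[OF refl])
      fix w assume "w \<in> sphere n"
      hence "reduced w" by (simp add: sphere_def F2_def)
      thus "(if w \<in> act [inv_letter x] c then 1 else 0) = (if mul_letter x w \<in> c then 1 else (0::real))"
        using mul_letter_in_iff[OF c, of w x] by simp
    qed
  qed
  also have "\<dots> = (\<Sum>w\<in>sphere n. \<Sum>x\<in>UNIV. g (mul_letter x w))" by (rule sum.swap)
  also have "\<dots> = (\<Sum>w\<in>sphere n. g (tl w)) + (\<Sum>w\<in>sphere n. \<Sum>x\<in>UNIV - {inv_letter (hd w)}. g (x # w))"
  proof -
    have "(\<Sum>w\<in>sphere n. \<Sum>x\<in>UNIV. g (mul_letter x w)) = (\<Sum>w\<in>sphere n. g (tl w) + (\<Sum>x\<in>UNIV - {inv_letter (hd w)}. g (x # w)))"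
    proof (rule sum.cong[OF refl])
      fix w assume "w \<in> sphere n" hence "w \<noteq> []" using n by (auto simp: sphere_def)
      thus "(\<Sum>x\<in>UNIV. g (mul_letter x w)) = g (tl w) + (\<Sum>x\<in>UNIV - {inv_letter (hd w)}. g (x # w))"
        by (rule sum_letters_split)
    qed
    thus ?thesis by (simp add: sum.distrib)
  qed
  also have "(\<Sum>w\<in>sphere n. \<Sum>x\<in>UNIV - {inv_letter (hd w)}. g (x # w)) = cnt (Suc n) c"
  proof -
    have "cnt (Suc n) c = (\<Sum>w\<in>sphere (1 + n). g w)" unfolding cnt_def g_def by simp
    also have "\<dots> = (\<Sum>v\<in>sphere n. \<Sum>u\<in>UU 1 (hd v). g (u @ v))" by (rule decomp) (use n in auto)
    also have "\<dots> = (\<Sum>v\<in>sphere n. \<Sum>x\<in>UNIV - {inv_letter (hd v)}. g (x # v))"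
      by (rule sum.cong[OF refl]) (simp add: UU1_sum UU1_sum')
    finally show ?thesis by simp
  qed
  also have "(\<Sum>w\<in>sphere n. g (tl w)) = 3 * cnt (n - 1) c"
  proof -
    have "sphere n = sphere (1 + (n - 1))" using n by simp
    hence "(\<Sum>w\<in>sphere n. g (tl w)) = (\<Sum>v\<in>sphere (n - 1). \<Sum>u\<in>UU 1 (hd v). g (tl (u @ v)))"
      using decomp[where n="n - 1" and L=1 and g="\<lambda>w. g (tl w)"] n by simp
    also have "\<dots> = (\<Sum>v\<in>sphere (n - 1). 3 * g v)"
    proof (rule sum.cong[OF refl])
      fix v
      have "(\<Sum>u\<in>UU 1 (hd v). g (tl (u @ v))) = (\<Sum>u\<in>UU 1 (hd v). g v)"
        by (rule sum.cong[OF refl]) (auto simp: UU_def length_Suc_conv)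
      thus "(\<Sum>u\<in>UU 1 (hd v). g (tl (u @ v))) = 3 * g v" using card_UU[of 1 "hd v"] by simp
    qed
    finally show ?thesis unfolding cnt_def g_def by (simp add: sum_distrib_left)
  qed
  finally show ?thesis by simp
qed

lemma mu_rec:
  assumes n: "n \<ge> 2" and c: "c \<in> C"
  shows "(\<Sum>x\<in>UNIV. mu n (act [inv_letter x] c)) = 3 * mu (Suc n) c + mu (n - 1) c"
proof -
  define a where "a = real (card (sphere (n - 1)))"
  have a: "a > 0" using sphere_nonempty by (simp add: a_def)
  have s1: "real (card (sphere n)) = 3 * a"
    using card_sphere_mult[of "n - 1" 1] n by (simp add: a_def)
  have s2: "real (card (sphere (Suc n))) = 9 * a"
    using card_sphere_mult[of "n - 1" 2] n by (simp add: a_def)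
  have "(\<Sum>x\<in>UNIV. mu n (act [inv_letter x] c)) = (\<Sum>x\<in>UNIV. cnt n (act [inv_letter x] c)) / (3 * a)"
    using mu_cnt act_C[OF c] s1 by (simp add: sum_divide_distrib)
  also have "\<dots> = (cnt (Suc n) c + 3 * cnt (n - 1) c) / (3 * a)" using cnt_rec[OF n c] by simp
  also have "\<dots> = 3 * (cnt (Suc n) c / (9 * a)) + cnt (n - 1) c / a" using a by (simp add: field_simps)
  also have "\<dots> = 3 * mu (Suc n) c + mu (n - 1) c" using mu_cnt[OF c] s2 a_def by simp
  finally show ?thesis .
qed

lemma act_trans: "c \<in> C \<Longrightarrow> c' \<in> C \<Longrightarrow> \<exists>d. act d c = c'"
proof -
  assume "c \<in> C" "c' \<in> C"
  then obtain z z' where z: "reduced z" "c = lcoset z K" "reduced z'" "c' = lcoset z' K" using C_iff by metis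
  have "mul (inv z) z = []" using mul_cancel[of "[]" z] mul_Nil_right[OF z(1)] by simp
  hence "mul (mul z' (inv z)) z = z'" using mul_assoc[OF inv_reduced[OF z(1)] z(1), of z'] mul_Nil_right[OF z(3)] by simp
  hence "act (mul z' (inv z)) c = c'" using act_lcoset[OF z(1)] z by simp
  thus ?thesis by blast
qed

lemma closed_all:
  assumes S: "\<And>c y. c \<in> C \<Longrightarrow> P c \<Longrightarrow> P (act [y] c)" and c0: "c0 \<in> C" "P c0"
  shows "\<forall>c\<in>C. P c"
proof
  fix c assume c: "c \<in> C"
  have "P (act u c0)" for u
  proof (induction u)
    case Nil thus ?case using c0 by simp
  next
    case (Cons x u) thus ?case using S act_C[OF c0(1)] act_Cons[of x u c0] by metis
  qed
  thus "P c" using act_trans[OF c0(1) c] by metis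
qed

lemma max_exists: "\<exists>c0\<in>C. \<forall>c\<in>C. (g c :: real) \<le> g c0"
proof -
  have ne: "g ` C \<noteq> {}" using C_nonempty by auto
  have "Max (g ` C) \<in> g ` C" using Max_in[OF finite_imageI[OF fin] ne] .
  then obtain c0 where c0: "c0 \<in> C" "g c0 = Max (g ` C)" by auto
  have "\<forall>c\<in>C. g c \<le> g c0" using c0(2) Max_ge[OF finite_imageI[OF fin]] by auto
  thus ?thesis using c0(1) by blast
qed

lemma sum_UNIV_const: "(\<Sum>x\<in>(UNIV::letter set). (M::real)) = 4 * M"
  using card_letters by simp

lemma MP1:
  fixes g :: "letter list set \<Rightarrow> real"
  assumes h: "\<And>c. c \<in> C \<Longrightarrow> (\<Sum>x\<in>UNIV. g (act [inv_letter x] c)) = 4 * g c"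
  shows "\<exists>M. \<forall>c\<in>C. g c = M"
proof -
  obtain c0 where c0: "c0 \<in> C" "\<forall>c\<in>C. g c \<le> g c0" using max_exists by blast
  define M where "M = g c0"
  have step: "g (act [y] c) = M" if c: "c \<in> C" and gc: "g c = M" for c y
  proof -
    define F where "F x = M - g (act [inv_letter x] c)" for x
    have "(\<Sum>x\<in>UNIV. F x) = 0"
      using h[OF c] gc by (simp add: F_def sum_subtractf card_letters)
    moreover have "\<And>x. 0 \<le> F x" using c0(2) act_C[OF c] M_def by (auto simp: F_def)
    ultimately have "\<forall>x\<in>UNIV. F x = 0"
      using sum_nonneg_eq_0_iff[OF finite_UNIV, of F] by blast
    hence "F (inv_letter y) = 0" by blast
    thus ?thesis by (simp add: F_def)
  qed
  have "\<forall>c\<in>C. g c = M" by (rule closed_all[of "\<lambda>c. g c = M", OF step c0(1)]) (auto simp: M_def)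
  thus ?thesis by blast
qed

lemma real_aux1: "\<bar>a\<bar> \<le> \<bar>t\<bar> \<Longrightarrow> 0 \<le> (a + t) * (t::real)"
proof -
  assume h: "\<bar>a\<bar> \<le> \<bar>t\<bar>"
  have "-(a*t) \<le> \<bar>a*t\<bar>" by simp
  also have "\<bar>a*t\<bar> = \<bar>a\<bar>*\<bar>t\<bar>" by (rule abs_mult)
  also have "\<dots> \<le> \<bar>t\<bar>*\<bar>t\<bar>" by (rule mult_right_mono[OF h]) simp
  also have "\<bar>t\<bar>*\<bar>t\<bar> = t*t" by simp
  finally show ?thesis by (simp add: algebra_simps)
qed

lemma real_aux2: "\<bar>a\<bar> \<le> \<bar>t\<bar> \<Longrightarrow> (a + t) * (t::real) = 0 \<Longrightarrow> a = - t"
  by (cases "t = 0") auto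

lemma MP2:
  fixes g :: "letter list set \<Rightarrow> real"
  assumes h: "\<And>c. c \<in> C \<Longrightarrow> (\<Sum>x\<in>UNIV. g (act [inv_letter x] c)) = - 4 * g c"
  shows "\<forall>c\<in>C. \<forall>y. g (act [y] c) = - g c"
proof -
  obtain c0 where c0: "c0 \<in> C" "\<forall>c\<in>C. \<bar>g c\<bar> \<le> \<bar>g c0\<bar>" using max_exists[of "\<lambda>c. \<bar>g c\<bar>"] by blast
  define M where "M = \<bar>g c0\<bar>"
  have step: "\<forall>y. g (act [y] c) = - g c" if c: "c \<in> C" and gc: "\<bar>g c\<bar> = M" for c
  proof
    fix y
    define t where "t = g c"
    have bd: "\<bar>g (act [inv_letter x] c)\<bar> \<le> \<bar>t\<bar>" for x using c0(2) act_C[OF c] gc M_def t_def by auto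
    have "(\<Sum>x\<in>UNIV. (g (act [inv_letter x] c) + t) * t) = (\<Sum>x\<in>UNIV. g (act [inv_letter x] c)) * t + 4 * (t * t)"
      by (simp add: sum.distrib sum_distrib_right card_letters algebra_simps sum_distrib_left)
    also have "\<dots> = 0" using h[OF c] t_def by simp
    finally have "(\<Sum>x\<in>UNIV. (g (act [inv_letter x] c) + t) * t) = 0" .
    moreover have "\<And>x. 0 \<le> (g (act [inv_letter x] c) + t) * t" using real_aux1[OF bd] by blast
    ultimately have "\<forall>x\<in>UNIV. (g (act [inv_letter x] c) + t) * t = 0"
      using sum_nonneg_eq_0_iff[OF finite_UNIV, of "\<lambda>x. (g (act [inv_letter x] c) + t) * t"] by blast
    hence "(g (act [inv_letter (inv_letter y)] c) + t) * t = 0" by blast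
    hence e0: "(g (act [y] c) + t) * t = 0" by simp
    have "\<bar>g (act [y] c)\<bar> \<le> \<bar>t\<bar>" using bd[of "inv_letter y"] by simp
    thus "g (act [y] c) = - g c" using real_aux2[OF _ e0] t_def by simp
  qed
  have cl: "\<forall>c\<in>C. \<bar>g c\<bar> = M"
  proof (rule closed_all[of "\<lambda>c. \<bar>g c\<bar> = M"])
    fix c y assume "c \<in> C" "\<bar>g c\<bar> = M"
    hence "g (act [y] c) = - g c" using step by blast
    thus "\<bar>g (act [y] c)\<bar> = M" using \<open>\<bar>g c\<bar> = M\<close> by simp
  qed (use c0 M_def in auto)
  thus ?thesis using step by blast
qed

end

context fg begin

lemma mu_lim0: "(\<lambda>i. mu (2*i+2) c) \<longlonglongrightarrow> lim (\<lambda>i. mu (2*i+2) c)"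
  using E_conv[of "ind c" 2] ind_bounds unfolding mu_def convergent_LIMSEQ_iff by simp
lemma mu_lim1: "(\<lambda>i. mu (2*i+1) c) \<longlonglongrightarrow> lim (\<lambda>i. mu (2*i+1) c)"
  using E_conv[of "ind c" 1] ind_bounds unfolding mu_def convergent_LIMSEQ_iff by simp

lemma main_lim:
  assumes c: "c \<in> C"
  shows "(\<lambda>n. (mu n c + mu n (act [inv_letter h] c)) / 2) \<longlonglongrightarrow> 1 / real (card C)"
proof -
  define p0 where "p0 c = lim (\<lambda>i. mu (2*i+2) c)" for c
  define p1 where "p1 c = lim (\<lambda>i. mu (2*i+1) c)" for c
  have L0: "(\<lambda>i. mu (2*i+2) c) \<longlonglongrightarrow> p0 c" for c using mu_lim0 p0_def by simp
  have L1: "(\<lambda>i. mu (2*i+1) c) \<longlonglongrightarrow> p1 c" for c using mu_lim1 p1_def by simp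
  have L1s: "(\<lambda>i. mu (2*i+3) c) \<longlonglongrightarrow> p1 c" for c
  proof -
    have "(\<lambda>i. mu (2*(i+1)+1) c) \<longlonglongrightarrow> p1 c" using LIMSEQ_ignore_initial_segment[OF L1[of c], of 1] .
    moreover have "(\<lambda>i. mu (2*(i+1)+1) c) = (\<lambda>i. mu (2*i+3) c)"
    proof (rule ext)
      fix i :: nat have "2*(i+1)+1 = 2*i+(3::nat)" by arith
      thus "mu (2*(i+1)+1) c = mu (2*i+3) c" by (simp only:)
    qed
    ultimately show ?thesis by simp
  qed
  have L0s: "(\<lambda>i. mu (2*i+4) c) \<longlonglongrightarrow> p0 c" for c
  proof -
    have "(\<lambda>i. mu (2*(i+1)+2) c) \<longlonglongrightarrow> p0 c" using LIMSEQ_ignore_initial_segment[OF L0[of c], of 1] .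
    moreover have "(\<lambda>i. mu (2*(i+1)+2) c) = (\<lambda>i. mu (2*i+4) c)"
    proof (rule ext)
      fix i :: nat have "2*(i+1)+2 = 2*i+(4::nat)" by arith
      thus "mu (2*(i+1)+2) c = mu (2*i+4) c" by (simp only:)
    qed
    ultimately show ?thesis by simp
  qed
  have R0: "(\<Sum>x\<in>UNIV. p0 (act [inv_letter x] c)) = 4 * p1 c" if c: "c \<in> C" for c
  proof -
    have "(\<lambda>i. \<Sum>x\<in>UNIV. mu (2*i+2) (act [inv_letter x] c)) \<longlonglongrightarrow> (\<Sum>x\<in>UNIV. p0 (act [inv_letter x] c))"
      by (rule tendsto_sum) (rule L0)
    moreover have "(\<lambda>i. \<Sum>x\<in>UNIV. mu (2*i+2) (act [inv_letter x] c)) = (\<lambda>i. 3 * mu (2*i+3) c + mu (2*i+1) c)"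
    proof
      fix i show "(\<Sum>x\<in>UNIV. mu (2*i+2) (act [inv_letter x] c)) = 3 * mu (2*i+3) c + mu (2*i+1) c"
      proof -
        have "(\<Sum>x\<in>UNIV. mu (2*i+2) (act [inv_letter x] c)) = 3 * mu (Suc (2*i+2)) c + mu (2*i+2 - 1) c"
          by (rule mu_rec) (use c in auto)
        moreover have "Suc (2*i+2) = 2*i+3" "2*i+2 - 1 = 2*i+1" by arith+
        ultimately show ?thesis by (simp only:)
      qed
    qed
    moreover have "(\<lambda>i. 3 * mu (2*i+3) c + mu (2*i+1) c) \<longlonglongrightarrow> 3 * p1 c + p1 c"
      by (rule tendsto_add[OF tendsto_mult[OF tendsto_const L1s] L1])
    ultimately show ?thesis using LIMSEQ_unique by simp
  qed
  have R1: "(\<Sum>x\<in>UNIV. p1 (act [inv_letter x] c)) = 4 * p0 c" if c: "c \<in> C" for c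
  proof -
    have "(\<lambda>i. \<Sum>x\<in>UNIV. mu (2*i+3) (act [inv_letter x] c)) \<longlonglongrightarrow> (\<Sum>x\<in>UNIV. p1 (act [inv_letter x] c))"
      by (rule tendsto_sum) (rule L1s)
    moreover have "(\<lambda>i. \<Sum>x\<in>UNIV. mu (2*i+3) (act [inv_letter x] c)) = (\<lambda>i. 3 * mu (2*i+4) c + mu (2*i+2) c)"
    proof
      fix i show "(\<Sum>x\<in>UNIV. mu (2*i+3) (act [inv_letter x] c)) = 3 * mu (2*i+4) c + mu (2*i+2) c"
      proof -
        have "(\<Sum>x\<in>UNIV. mu (2*i+3) (act [inv_letter x] c)) = 3 * mu (Suc (2*i+3)) c + mu (2*i+3 - 1) c"
          by (rule mu_rec) (use c in auto)
        moreover have "Suc (2*i+3) = 2*i+4" "2*i+3 - 1 = 2*i+2" by arith+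
        ultimately show ?thesis by (simp only:)
      qed
    qed
    moreover have "(\<lambda>i. 3 * mu (2*i+4) c + mu (2*i+2) c) \<longlonglongrightarrow> 3 * p0 c + p0 c"
      by (rule tendsto_add[OF tendsto_mult[OF tendsto_const L0s] L0])
    ultimately show ?thesis using LIMSEQ_unique by simp
  qed
  have S0: "(\<Sum>c\<in>C. p0 c) = 1"
  proof -
    have t: "(\<lambda>i. \<Sum>c\<in>C. mu (2*i+2) c) \<longlonglongrightarrow> (\<Sum>c\<in>C. p0 c)" by (rule tendsto_sum) (rule L0)
    have "(\<lambda>i. \<Sum>c\<in>C. mu (2*i+2) c) = (\<lambda>i. 1)" using mu_sum by simp
    hence "(\<lambda>i. 1::real) \<longlonglongrightarrow> (\<Sum>c\<in>C. p0 c)" using t by simp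
    from LIMSEQ_unique[OF tendsto_const this] show ?thesis by simp
  qed
  have S1: "(\<Sum>c\<in>C. p1 c) = 1"
  proof -
    have t: "(\<lambda>i. \<Sum>c\<in>C. mu (2*i+1) c) \<longlonglongrightarrow> (\<Sum>c\<in>C. p1 c)" by (rule tendsto_sum) (rule L1)
    have "(\<lambda>i. \<Sum>c\<in>C. mu (2*i+1) c) = (\<lambda>i. 1)" using mu_sum by simp
    hence "(\<lambda>i. 1::real) \<longlonglongrightarrow> (\<Sum>c\<in>C. p1 c)" using t by simp
    from LIMSEQ_unique[OF tendsto_const this] show ?thesis by simp
  qed
  define \<sigma> where "\<sigma> c = p0 c + p1 c" for c
  define \<delta> where "\<delta> c = p0 c - p1 c" for c
  have "\<exists>M. \<forall>c\<in>C. \<sigma> c = M"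
  proof (rule MP1)
    fix c assume c: "c \<in> C"
    have "(\<Sum>x\<in>UNIV. \<sigma> (act [inv_letter x] c)) = (\<Sum>x\<in>UNIV. p0 (act [inv_letter x] c)) + (\<Sum>x\<in>UNIV. p1 (act [inv_letter x] c))"
      unfolding \<sigma>_def by (rule sum.distrib)
    also have "\<dots> = 4 * p1 c + 4 * p0 c" using R0[OF c] R1[OF c] by simp
    also have "\<dots> = 4 * \<sigma> c" unfolding \<sigma>_def by simp
    finally show "(\<Sum>x\<in>UNIV. \<sigma> (act [inv_letter x] c)) = 4 * \<sigma> c" .
  qed
  then obtain M where M: "\<forall>c\<in>C. \<sigma> c = M" by blast
  have "(\<Sum>c\<in>C. \<sigma> c) = (\<Sum>c\<in>C. p0 c) + (\<Sum>c\<in>C. p1 c)" unfolding \<sigma>_def by (rule sum.distrib)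
  hence s2: "(\<Sum>c\<in>C. \<sigma> c) = 2" using S0 S1 by simp
  have "(\<Sum>c\<in>C. \<sigma> c) = (\<Sum>c\<in>C. M)" by (rule sum.cong[OF refl]) (use M in blast)
  hence CM: "real (card C) * M = 2" using s2 by simp
  have D: "\<forall>c\<in>C. \<forall>y. \<delta> (act [y] c) = - \<delta> c"
  proof (rule MP2)
    fix c assume c: "c \<in> C"
    have "(\<Sum>x\<in>UNIV. \<delta> (act [inv_letter x] c)) = (\<Sum>x\<in>UNIV. p0 (act [inv_letter x] c)) - (\<Sum>x\<in>UNIV. p1 (act [inv_letter x] c))"
      unfolding \<delta>_def by (rule sum_subtractf)
    also have "\<dots> = 4 * p1 c - 4 * p0 c" using R0[OF c] R1[OF c] by simp
    also have "\<dots> = - 4 * \<delta> c" unfolding \<delta>_def by simp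
    finally show "(\<Sum>x\<in>UNIV. \<delta> (act [inv_letter x] c)) = - 4 * \<delta> c" .
  qed
  define ch where "ch = act [inv_letter h] c"
  have ch: "ch \<in> C" using act_C[OF c] ch_def by simp
  have val: "1 / real (card C) = M / 2"
  proof -
    have "real (card C) > 0" using fin C_nonempty card_gt_0_iff by auto
    thus ?thesis using CM by (simp add: divide_simps) (simp add: mult.commute)
  qed
  have E0: "(\<lambda>i. (mu (2*i+2) c + mu (2*i+2) ch) / 2) \<longlonglongrightarrow> (p0 c + p0 ch) / 2"
    by (rule tendsto_divide[OF tendsto_add[OF L0 L0] tendsto_const]) simp
  have E1: "(\<lambda>i. (mu (2*i+1) c + mu (2*i+1) ch) / 2) \<longlonglongrightarrow> (p1 c + p1 ch) / 2"
    by (rule tendsto_divide[OF tendsto_add[OF L1 L1] tendsto_const]) simp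
  have dch: "\<delta> ch = - \<delta> c" using D c ch_def by blast
  have m1: "p0 c + p1 c = M" using M c unfolding \<sigma>_def by blast
  have m2: "p0 ch + p1 ch = M" using M ch unfolding \<sigma>_def by blast
  have m3: "p0 ch - p1 ch = - (p0 c - p1 c)" using dch unfolding \<delta>_def .
  have "p0 c + p0 ch = M" using m1 m2 m3 by linarith
  hence v0: "(p0 c + p0 ch) / 2 = M / 2" by simp
  have "p1 c + p1 ch = M" using m1 m2 m3 by linarith
  hence v1: "(p1 c + p1 ch) / 2 = M / 2" by simp
  have E0': "(\<lambda>i. (mu (2*i+2) c + mu (2*i+2) ch) / 2) \<longlonglongrightarrow> M / 2" using E0 unfolding v0 .
  have E1': "(\<lambda>i. (mu (2*i+1) c + mu (2*i+1) ch) / 2) \<longlonglongrightarrow> M / 2" using E1 unfolding v1 .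
  have "(\<lambda>n. (mu n c + mu n ch) / 2) \<longlonglongrightarrow> M / 2"
    by (rule evenodd_lim[OF E0' E1'])
  thus ?thesis unfolding ch_def val .
qed

lemma dens_mu:
  assumes c: "c \<in> C"
  shows "dens n h c = (mu n c + mu n (act [inv_letter h] c)) / 2"
proof -
  define ch where "ch = act [inv_letter h] c"
  have ch: "ch \<in> C" using act_C[OF c] ch_def by simp
  have e1: "c \<inter> sphere n = {w\<in>sphere n. w \<in> c}" by auto
  have e2: "c \<inter> mul [h] ` sphere n = mul [h] ` {w\<in>sphere n. w \<in> ch}"
  proof
    show "c \<inter> mul [h] ` sphere n \<subseteq> mul [h] ` {w\<in>sphere n. w \<in> ch}"
    proof
      fix y assume "y \<in> c \<inter> mul [h] ` sphere n"
      then obtain w where w: "w \<in> sphere n" "y = mul [h] w" "mul [h] w \<in> c" by auto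
      have "reduced w" using w(1) by (simp add: sphere_def F2_def)
      hence "w \<in> ch" using mul_letter_in_iff[OF c, of w h] w(3) ch_def by simp
      thus "y \<in> mul [h] ` {w\<in>sphere n. w \<in> ch}" using w by blast
    qed
    show "mul [h] ` {w\<in>sphere n. w \<in> ch} \<subseteq> c \<inter> mul [h] ` sphere n"
    proof
      fix y assume "y \<in> mul [h] ` {w\<in>sphere n. w \<in> ch}"
      then obtain w where w: "w \<in> sphere n" "y = mul [h] w" "w \<in> ch" by auto
      have "reduced w" using w(1) by (simp add: sphere_def F2_def)
      hence "mul [h] w \<in> c" using mul_letter_in_iff[OF c, of w h] w(3) ch_def by simp
      thus "y \<in> c \<inter> mul [h] ` sphere n" using w by blast
    qed
  qed
  have inj: "inj_on (mul [h]) {w\<in>sphere n. w \<in> ch}"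
  proof (rule inj_onI)
    fix w w' assume w: "w \<in> {w\<in>sphere n. w \<in> ch}" "w' \<in> {w\<in>sphere n. w \<in> ch}" "mul [h] w = mul [h] w'"
    have rw: "reduced w" "reduced w'" using w(1,2) by (auto simp: sphere_def F2_def)
    have "w = mul (inv [h]) (mul [h] w)" using mul_cancel[OF rw(1), of "[h]"] by (rule sym)
    also have "mul [h] w = mul [h] w'" using w(3) .
    also have "mul (inv [h]) (mul [h] w') = w'" using mul_cancel[OF rw(2), of "[h]"] .
    finally show "w = w'" .
  qed
  have k2: "real (card (c \<inter> mul [h] ` sphere n)) = cnt n ch"
    unfolding e2 cnt_card using card_image[OF inj] by simp
  have k1: "real (card (c \<inter> sphere n)) = cnt n c"
    unfolding e1 cnt_card by simp
  show ?thesis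
    unfolding dens_def k1 k2 ch_def[symmetric] mu_cnt[OF c] mu_cnt[OF ch]
    by (simp add: add_divide_distrib)
qed

end

theorem corollary5p8:
  fixes K :: "letter list set" and h :: letter and z :: "letter list"
  assumes "is_subgroup K" and "finite (lcosets K)" and "z \<in> F2"
  shows "(\<lambda>n. dens n h (lcoset z K)) \<longlonglongrightarrow> 1 / real (index K)"
proof -
  interpret fg K using assms(1,2) by (rule fg.intro)
  have c: "lcoset z K \<in> lcosets K" using assms(3) lcoset_in_C by (simp add: F2_def)
  show ?thesis
    unfolding index_def dens_mu[OF c] using main_lim[OF c] .
qed


end
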